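(* Let $\Gamma$ be a group, $\alpha\in\mathrm{Aut}(\Gamma)$ and $a\in K(\alpha)$. Then the set $\{x\in\mathbb Q_2: a(x)\neq e_\Gamma\}$ is dense in $\mathrm{supp}(a)$.
   Context: $\{0,1\}^*$ denotes the finite words over $\{0,1\}$ (including the empty word), $|u|$ the length; $\mathfrak C=\{0,1\}^{\mathbb N}$ with the product topology; $\mathbb Q_2\subset\mathfrak C$ the eventually-zero sequences $u00\cdots$. $K(\alpha)$ is the group of maps $a:\{0,1\}^*\to\Gamma$ with $a(u)=\alpha(a(u0))$ for all $u$. For $x\in\mathbb Q_2$ one sets $a(x):=\alpha^{|u|}(a(u))$ where $x=u00\cdots$ (independent of the choice of $u$). The support is $\mathrm{supp}(a):=\{x=x_0x_1\cdots\in\mathfrak C:\ \text{for every } m\ge0 \text{ the map } w\mapsto a(x_0\cdots x_mw),\ w\in\{0,1\}^*, \text{ is not identically } e_\Gamma\}$. *)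

theory Defs
  imports "HOL-Analysis.Analysis" "HOL-Algebra.Group"
begin

(* Binary words {0,1}^* are bool lists (False = 0, True = 1), first letter first.
   Cantor space = nat => bool with the product topology (bool discrete). *)

definition Q2 :: "(nat \<Rightarrow> bool) set" where
  "Q2 = {x. \<exists>n. \<forall>k\<ge>n. \<not> x k}"

definition Kalpha :: "('g, 'b) monoid_scheme \<Rightarrow> ('g \<Rightarrow> 'g) \<Rightarrow> (bool list \<Rightarrow> 'g) set" where
  "Kalpha G \<alpha> = {a. \<forall>u. a u \<in> carrier G \<and> a u = \<alpha> (a (u @ [False]))}"

(* value at x = u00..., computed with u = x_0...x_{n-1}, n least with x eventually zero from n *)
definition Kval :: "('g \<Rightarrow> 'g) \<Rightarrow> (bool list \<Rightarrow> 'g) \<Rightarrow> (nat \<Rightarrow> bool) \<Rightarrow> 'g" where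
  "Kval \<alpha> a x = (let n = (LEAST n. \<forall>k\<ge>n. \<not> x k) in (\<alpha> ^^ n) (a (map x [0..<n])))"

definition Ksupp :: "('g, 'b) monoid_scheme \<Rightarrow> (bool list \<Rightarrow> 'g) \<Rightarrow> (nat \<Rightarrow> bool) set" where
  "Ksupp G a = {x. \<forall>m. \<exists>w. a (map x [0..<Suc m] @ w) \<noteq> \<one>\<^bsub>G\<^esub>}"

end

theory Submission
  imports Defs
begin

lemma cyl:
  fixes U :: "(nat \<Rightarrow> 'b::topological_space) set"
  assumes "open U" "x \<in> U"
  shows "\<exists>N. \<forall>y. (\<forall>i<N. y i = x i) \<longrightarrow> y \<in> U"
proof -
  have *: "openin (product_topology (\<lambda>i. euclidean) UNIV) U"
    using open_fun_def assms by auto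
  obtain X where H: "Pi\<^sub>E UNIV X \<subseteq> U"
                    "\<And>i. openin euclidean (X i)"
                    "finite {i. X i \<noteq> topspace euclidean}"
                    "x \<in> Pi\<^sub>E UNIV X"
    using product_topology_open_contains_basis[OF * \<open>x \<in> U\<close>] by auto
  obtain N where N: "\<And>i. i \<in> {i. X i \<noteq> UNIV} \<Longrightarrow> i < N"
    using H(3) finite_nat_bounded by (metis lessThan_iff subset_eq topspace_euclidean)
  show ?thesis
  proof (intro exI allI impI)
    fix y assume y: "\<forall>i<N. y i = x i"
    have "y \<in> Pi\<^sub>E UNIV X"
    proof (auto simp: PiE_iff)
      fix i show "y i \<in> X i"
      proof (cases "X i = UNIV")
        case False then have "i < N" using N by auto
        then show ?thesis using y H(4) by (auto simp: PiE_iff)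
      qed auto
    qed
    then show "y \<in> U" using H(1) by auto
  qed
qed

lemma alpha_one:
  assumes "group G" "\<alpha> \<in> iso G G" "g \<in> carrier G"
  shows "\<alpha> g = \<one>\<^bsub>G\<^esub> \<longleftrightarrow> g = \<one>\<^bsub>G\<^esub>"
proof -
  have h: "\<alpha> \<in> hom G G" and inj: "inj_on \<alpha> (carrier G)"
    using assms(2) by (auto simp: iso_iff)
  have "\<alpha> \<one>\<^bsub>G\<^esub> = \<one>\<^bsub>G\<^esub>" using hom_one[OF h assms(1) assms(1)] .
  moreover have "\<one>\<^bsub>G\<^esub> \<in> carrier G" using assms(1) by (simp add: group.is_monoid monoid.one_closed)
  ultimately show ?thesis using inj assms(3) by (metis inj_on_def)
qed

lemma alpha_pow:
  assumes "group G" "\<alpha> \<in> iso G G" "g \<in> carrier G"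
  shows "(\<alpha> ^^ n) g \<in> carrier G \<and> ((\<alpha> ^^ n) g = \<one>\<^bsub>G\<^esub> \<longleftrightarrow> g = \<one>\<^bsub>G\<^esub>)"
proof (induction n)
  case 0 then show ?case using assms by simp
next
  case (Suc n)
  have "\<alpha> \<in> hom G G" using assms(2) by (auto simp: iso_iff)
  then have "\<alpha> ((\<alpha> ^^ n) g) \<in> carrier G" using Suc by (auto simp: hom_def)
  then show ?case using Suc alpha_one[OF assms(1,2)] by simp
qed

lemma a_rep:
  assumes "group G" "\<alpha> \<in> iso G G" "a \<in> Kalpha G \<alpha>"
  shows "a (u @ replicate k False) = \<one>\<^bsub>G\<^esub> \<longleftrightarrow> a u = \<one>\<^bsub>G\<^esub>"
proof (induction k)
  case 0 then show ?case by simp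
next
  case (Suc k)
  have e: "(u @ replicate k False) @ [False] = u @ replicate (Suc k) False"
    by (simp add: replicate_append_same)
  have K: "\<And>v. a v \<in> carrier G \<and> a v = \<alpha> (a (v @ [False]))"
    using assms(3) unfolding Kalpha_def by blast
  have "a (u @ replicate k False) = \<alpha> (a (u @ replicate (Suc k) False))"
    using K[of "u @ replicate k False"] unfolding e by blast
  moreover have c: "a (u @ replicate (Suc k) False) \<in> carrier G"
    using K by blast
  ultimately
  show ?case using Suc alpha_one[OF assms(1,2) c] by simp
qed

lemma map_split:
  assumes "\<forall>k\<ge>n. \<not> x k" "n \<le> L"
  shows "map x [0..<L] = map x [0..<n] @ replicate (L - n) False"
proof -
  have "[0..<L] = [0..<n] @ [n..<L]" using assms(2) upt_add_eq_append[of 0 n "L-n"] by simp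
  moreover have "map x [n..<L] = replicate (L - n) False"
    using assms(1) by (simp add: map_replicate_const[symmetric] list_eq_iff_nth_eq)
  ultimately show ?thesis by simp
qed

lemma Kval_char:
  assumes "group G" "\<alpha> \<in> iso G G" "a \<in> Kalpha G \<alpha>"
    and z: "\<forall>k\<ge>n0. \<not> x k" and L: "n0 \<le> L"
  shows "Kval \<alpha> a x = \<one>\<^bsub>G\<^esub> \<longleftrightarrow> a (map x [0..<L]) = \<one>\<^bsub>G\<^esub>"
proof -
  define n where "n = (LEAST n. \<forall>k\<ge>n. \<not> x k)"
  have zn: "\<forall>k\<ge>n. \<not> x k" unfolding n_def using z by (rule LeastI)
  have "n \<le> n0" unfolding n_def using z by (rule Least_le)
  then have "n \<le> L" using L by linarith
  then have m: "map x [0..<L] = map x [0..<n] @ replicate (L - n) False"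
    by (rule map_split[OF zn])
  have c: "a (map x [0..<n]) \<in> carrier G" using assms(3) unfolding Kalpha_def by blast
  have 1: "a (map x [0..<L]) = \<one>\<^bsub>G\<^esub> \<longleftrightarrow> a (map x [0..<n]) = \<one>\<^bsub>G\<^esub>"
    unfolding m by (rule a_rep[OF assms(1,2,3)])
  have 2: "Kval \<alpha> a x = (\<alpha> ^^ n) (a (map x [0..<n]))"
    unfolding Kval_def Let_def n_def by (rule refl)
  show ?thesis
    unfolding 1 2 using alpha_pow[OF assms(1,2) c, of n] by blast
qed

theorem mainTheorem10:
  fixes G :: "('g, 'b) monoid_scheme" and \<alpha> :: "'g \<Rightarrow> 'g" and a :: "bool list \<Rightarrow> 'g"
  assumes "group G" and "\<alpha> \<in> iso G G" and "a \<in> Kalpha G \<alpha>"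
  shows "{x \<in> Q2. Kval \<alpha> a x \<noteq> \<one>\<^bsub>G\<^esub>} \<subseteq> Ksupp G a
         \<and> Ksupp G a \<subseteq> closure {x \<in> Q2. Kval \<alpha> a x \<noteq> \<one>\<^bsub>G\<^esub>}"
proof
  show "{x \<in> Q2. Kval \<alpha> a x \<noteq> \<one>\<^bsub>G\<^esub>} \<subseteq> Ksupp G a"
  proof (unfold Ksupp_def, intro subsetI CollectI allI)
    fix x m assume "x \<in> {x \<in> Q2. Kval \<alpha> a x \<noteq> \<one>\<^bsub>G\<^esub>}"
    then have "x \<in> Q2" and nz: "Kval \<alpha> a x \<noteq> \<one>\<^bsub>G\<^esub>" by auto
    then obtain n0 where z: "\<forall>k\<ge>n0. \<not> x k" by (auto simp: Q2_def)
    define L where "L = max n0 (Suc m)"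
    have "a (map x [0..<L]) \<noteq> \<one>\<^bsub>G\<^esub>"
      using Kval_char[OF assms z, of L] nz unfolding L_def by simp
    moreover have "[0..<L] = [0..<Suc m] @ [Suc m..<L]"
      using upt_add_eq_append[of 0 "Suc m" "L - Suc m"] by (simp add: L_def)
    ultimately show "\<exists>w. a (map x [0..<Suc m] @ w) \<noteq> \<one>\<^bsub>G\<^esub>" by (metis map_append)
  qed
next
  show "Ksupp G a \<subseteq> closure {x \<in> Q2. Kval \<alpha> a x \<noteq> \<one>\<^bsub>G\<^esub>}"
  proof
    fix x assume x: "x \<in> Ksupp G a"
    show "x \<in> closure {x \<in> Q2. Kval \<alpha> a x \<noteq> \<one>\<^bsub>G\<^esub>}"
      unfolding closure_iff_nhds_not_empty
    proof (intro allI impI)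
      fix A S assume SA: "S \<subseteq> A" and "open S" and "x \<in> S"
      then obtain N where N: "\<And>y. (\<forall>i<N. y i = x i) \<Longrightarrow> y \<in> S" using cyl[of S x] by auto
      obtain w where w: "a (map x [0..<Suc N] @ w) \<noteq> \<one>\<^bsub>G\<^esub>" using x by (auto simp: Ksupp_def)
      define v where "v = map x [0..<Suc N] @ w"
      define y where "y = (\<lambda>i. if i < length v then v ! i else False)"
      have zy: "\<forall>k\<ge>length v. \<not> y k" by (simp add: y_def)
      have "map y [0..<length v] = v" unfolding list_eq_iff_nth_eq by (simp add: y_def)
      then have "Kval \<alpha> a y \<noteq> \<one>\<^bsub>G\<^esub>"
        using Kval_char[OF assms zy, of "length v"] w by (simp add: v_def)
      moreover have "y \<in> Q2" using zy by (auto simp: Q2_def)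
      moreover have "\<forall>i<N. y i = x i"
      proof (intro allI impI)
        fix i assume "i < N"
        then have "i < length v" "v ! i = x i" unfolding v_def by (auto simp: nth_append)
        then show "y i = x i" unfolding y_def by simp
      qed
      ultimately show "{x \<in> Q2. Kval \<alpha> a x \<noteq> \<one>\<^bsub>G\<^esub>} \<inter> A \<noteq> {}"
        using N SA by blast
    qed
  qed
qed

end
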